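(* Let $\mathcal{X}$ be a finite set with symmetric nonnegative weights $(w_{x,x'})$ summing to $1$, with $w_x:=\sum_{x'}w_{x,x'}>0$ for all $x$. Let $\boldsymbol{M}=(m_{x,x'})$ be any real margin matrix. For $f:\mathcal{X}\to\mathbb{R}^k$, define the margin tuning loss $$\mathcal{L}_{\mathrm{M}}(f)=-2\sum_{x,x'}w_{x,x'}f(x)^\top f(x')+\sum_{x,x'}w_xw_{x'}\big[f(x)^\top f(x')+m_{x,x'}\big]^2 .$$ Let $\boldsymbol{A}=(w_{x,x'})$, $\boldsymbol{D}=\mathrm{diag}(w_x)$, $\bar{\boldsymbol{A}}=\boldsymbol{D}^{-1/2}\boldsymbol{A}\boldsymbol{D}^{-1/2}$, and $\bar{\boldsymbol{M}}=\boldsymbol{D}^{1/2}\boldsymbol{M}\boldsymbol{D}^{1/2}$. Let $F$ be the matrix with rows $\sqrt{w_x}\,f(x)^\top$. Then there is a constant $C$, depending only on $(w_{x,x'})$ and $\boldsymbol{M}$ and not on $f$, such that for all $f$ $$\mathcal{L}_{\mathrm{M}}(f)=\|(\bar{\boldsymbol{A}}-\bar{\boldsymbol{M}})-FF^\top\|_F^2+C .$$ In particular, minimizing $\mathcal{L}_{\mathrm{M}}$ over $f$ is equivalent to minimizing $\|(\bar{\boldsymbol{A}}-\bar{\boldsymbol{M}})-FF^\top\|_F^2$ over $F$.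
   Context: $\|\cdot\|_F$ is the Frobenius norm. *)

theory Defs
  imports "HOL-Analysis.Analysis"
begin

definition deg :: "('x::finite \<Rightarrow> 'x \<Rightarrow> real) \<Rightarrow> 'x \<Rightarrow> real" where
  "deg w x = (\<Sum>x'\<in>UNIV. w x x')"

definition margin_loss ::
  "('x::finite \<Rightarrow> 'x \<Rightarrow> real) \<Rightarrow> ('x \<Rightarrow> 'x \<Rightarrow> real) \<Rightarrow> ('x \<Rightarrow> real^'k) \<Rightarrow> real" where
  "margin_loss w M f =
     - 2 * (\<Sum>x\<in>UNIV. \<Sum>x'\<in>UNIV. w x x' * (f x \<bullet> f x'))
     + (\<Sum>x\<in>UNIV. \<Sum>x'\<in>UNIV. deg w x * deg w x' * (f x \<bullet> f x' + M x x')\<^sup>2)"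

definition adj_mat :: "('x::finite \<Rightarrow> 'x \<Rightarrow> real) \<Rightarrow> real^'x^'x" where
  "adj_mat w = (\<chi> i j. w i j)"

definition deg_mat :: "('x::finite \<Rightarrow> 'x \<Rightarrow> real) \<Rightarrow> real^'x^'x" where
  "deg_mat w = (\<chi> i j. if i = j then deg w i else 0)"

definition deg_mat_pow :: "real \<Rightarrow> ('x::finite \<Rightarrow> 'x \<Rightarrow> real) \<Rightarrow> real^'x^'x" where
  "deg_mat_pow p w = (\<chi> i j. if i = j then deg w i powr p else 0)"

definition norm_adj :: "('x::finite \<Rightarrow> 'x \<Rightarrow> real) \<Rightarrow> real^'x^'x" where
  "norm_adj w = deg_mat_pow (-1/2) w ** adj_mat w ** deg_mat_pow (-1/2) w"

definition norm_margin :: "('x::finite \<Rightarrow> 'x \<Rightarrow> real) \<Rightarrow> ('x \<Rightarrow> 'x \<Rightarrow> real) \<Rightarrow> real^'x^'x" where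
  "norm_margin w M = deg_mat_pow (1/2) w ** (\<chi> i j. M i j) ** deg_mat_pow (1/2) w"

definition emb_mat :: "('x::finite \<Rightarrow> 'x \<Rightarrow> real) \<Rightarrow> ('x \<Rightarrow> real^'k) \<Rightarrow> real^'k^'x" where
  "emb_mat w f = (\<chi> x. sqrt (deg w x) *\<^sub>R f x)"

definition frob_norm :: "real^'n::finite^'m::finite \<Rightarrow> real" where
  "frob_norm A = sqrt (\<Sum>i\<in>UNIV. \<Sum>j\<in>UNIV. (A $ i $ j)\<^sup>2)"

end

theory Submission
  imports Defs
begin

lemma diag_left: "((\<chi> i j. if i = j then (d i::real) else 0) ** (A::real^'x::finite^'x)) $ i $ j = d i * A $ i $ j"
proof -
  have "((\<chi> i j. if i = j then (d i::real) else 0) ** A) $ i $ j = (\<Sum>k\<in>UNIV. (if i = k then d i else 0) * A $ k $ j)"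
    by (simp add: matrix_matrix_mult_def)
  also have "\<dots> = (\<Sum>k\<in>UNIV. if i = k then d i * A $ k $ j else 0)"
    by (rule sum.cong) auto
  finally show ?thesis by simp
qed

lemma diag_right: "((A::real^'x::finite^'x) ** (\<chi> i j. if i = j then (d i::real) else 0)) $ i $ j = A $ i $ j * d j"
proof -
  have "(A ** (\<chi> i j. if i = j then (d i::real) else 0)) $ i $ j = (\<Sum>k\<in>UNIV. A $ i $ k * (if k = j then d k else 0))"
    by (simp add: matrix_matrix_mult_def)
  also have "\<dots> = (\<Sum>k\<in>UNIV. if k = j then A $ i $ k * d k else 0)"
    by (rule sum.cong) auto
  finally show ?thesis by simp
qed

lemma alg_key:
  fixes B a g w D M :: real
  assumes "B * a = w - D * M" "a^2 = D"
  shows "(B - a * g)\<^sup>2 + (D * M\<^sup>2 - B\<^sup>2) = -2 * (w * g) + D * (g + M)\<^sup>2"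
proof -
  have "(B - a * g)\<^sup>2 + (D * M\<^sup>2 - B\<^sup>2) = -2 * (B * a) * g + a^2 * g^2 + D * M\<^sup>2"
    by (simp add: power2_eq_square algebra_simps)
  also have "\<dots> = -2 * (w * g) + D * (g + M)\<^sup>2"
    unfolding assms by (simp add: power2_eq_square algebra_simps)
  finally show ?thesis .
qed

theorem theorem3:
  fixes w :: "'x::finite \<Rightarrow> 'x \<Rightarrow> real"
    and M :: "'x \<Rightarrow> 'x \<Rightarrow> real"
  assumes sym: "\<And>x x'. w x x' = w x' x"
    and nonneg: "\<And>x x'. w x x' \<ge> 0"
    and total: "(\<Sum>x\<in>UNIV. \<Sum>x'\<in>UNIV. w x x') = 1"
    and pos: "\<And>x. deg w x > 0"
  shows "\<exists>C::real. \<forall>f :: 'x \<Rightarrow> real^'k.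
           margin_loss w M f =
             (frob_norm ((norm_adj w - norm_margin w M) - emb_mat w f ** transpose (emb_mat w f)))\<^sup>2 + C"
proof -
  define d where "d = deg w"
  define s where "s = (\<lambda>x. sqrt (d x))"
  have dpos: "\<And>x. d x > 0" using pos by (simp add: d_def)
  have ss: "\<And>x. s x * s x = d x" using dpos by (simp add: s_def less_imp_le)
  have spos: "\<And>x. s x > 0" using dpos by (simp add: s_def)
  define B where "B = (\<lambda>i j. w i j / (s i * s j) - s i * M i j * s j)"
  have pm: "\<And>x. d x powr - (1/2) = 1 / s x"
    using dpos by (simp add: s_def powr_minus_divide powr_half_sqrt less_imp_le)
  have pp: "\<And>x. d x powr (1/2) = s x"
    using dpos by (simp add: s_def powr_half_sqrt less_imp_le)
  have NA: "norm_adj w $ i $ j = w i j / (s i * s j)" for i j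
    unfolding norm_adj_def deg_mat_pow_def d_def[symmetric]
    by (simp add: diag_left diag_right pm adj_mat_def)
  have NM: "norm_margin w M $ i $ j = s i * M i j * s j" for i j
    unfolding norm_margin_def deg_mat_pow_def d_def[symmetric]
    by (simp add: diag_left diag_right pp)
  define C where "C = (\<Sum>i\<in>UNIV. \<Sum>j\<in>UNIV. d i * d j * (M i j)\<^sup>2 - (B i j)\<^sup>2)"
  show ?thesis
  proof (intro exI allI)
    fix f :: "'x \<Rightarrow> real^'k"
    have FF: "(emb_mat w f ** transpose (emb_mat w f)) $ i $ j = s i * s j * (f i \<bullet> f j)" for i j
      unfolding emb_mat_def d_def[symmetric] s_def[symmetric]
      by (simp add: s_def matrix_matrix_mult_def transpose_def inner_vec_def sum_distrib_left algebra_simps)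
    have ent: "((norm_adj w - norm_margin w M) - emb_mat w f ** transpose (emb_mat w f)) $ i $ j
        = B i j - s i * s j * (f i \<bullet> f j)" for i j
      by (simp add: NA NM FF B_def)
    have pt: "(B i j - s i * s j * (f i \<bullet> f j))\<^sup>2 + (d i * d j * (M i j)\<^sup>2 - (B i j)\<^sup>2)
       = -2 * (w i j * (f i \<bullet> f j)) + d i * d j * (f i \<bullet> f j + M i j)\<^sup>2" for i j
    proof -
      have "B i j * (s i * s j) = w i j - d i * d j * M i j"
        using spos[of i] spos[of j] ss[of i] ss[of j]
        by (simp add: B_def field_simps)
      moreover have "(s i * s j)^2 = d i * d j" using ss[of i] ss[of j] by (simp add: power2_eq_square algebra_simps)
      ultimately show ?thesis
        using alg_key[of "B i j" "s i * s j" "w i j" "d i * d j" "M i j" "f i \<bullet> f j"] by simp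
    qed
    have "(frob_norm ((norm_adj w - norm_margin w M) - emb_mat w f ** transpose (emb_mat w f)))\<^sup>2 + C
       = (\<Sum>i\<in>UNIV. \<Sum>j\<in>UNIV. (B i j - s i * s j * (f i \<bullet> f j))\<^sup>2) + C"
      unfolding frob_norm_def ent by (simp add: sum_nonneg)
    also have "\<dots> = (\<Sum>i\<in>UNIV. \<Sum>j\<in>UNIV. -2 * (w i j * (f i \<bullet> f j)) + d i * d j * (f i \<bullet> f j + M i j)\<^sup>2)"
      unfolding C_def by (simp add: pt sum.distrib[symmetric])
    also have "\<dots> = margin_loss w M f"
      unfolding margin_loss_def d_def by (simp add: sum_subtractf sum_negf sum_distrib_left sum.distrib)
    finally show "margin_loss w M f = (frob_norm ((norm_adj w - norm_margin w M) - emb_mat w f ** transpose (emb_mat w f)))\<^sup>2 + C" by simp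
  qed
qed

end
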